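(* Let $Y$ be a $\mathbb C$-vector space. Then the pairing $\langle\sum_{u\in M}A_ux^{-u},\sum_{u\in M}B_ux^u\rangle=\sum_uB_uA_u$ induces an isomorphism $\mathcal K_0(Y)\cong\mathrm{Hom}_{\mathbb C}(\mathcal W_0,Y)$.
   Context: Let $A=\{\mathbf a_1,\dots,\mathbf a_m\}\subseteq\mathbb Z^n$ be linearly independent over $\mathbb R$, with $\mathbf a_j=(a_{1j},\dots,a_{nj})$, and $\ell_1,\dots,\ell_m$ positive integers (part of a relation $\ell_0\mathbf a_0=\sum_j\ell_j\mathbf a_j$, $\ell_0=\sum_j\ell_j$, $\mathbf a_0\in\mathbb Z^n$, $\gcd(\ell_0,\dots,\ell_m)=1$). Let $f_0=\sum_{j=1}^m\ell_jx^{\mathbf a_j}$. Let $V$ be the real span of $A$, $V_{\mathbb Z}=V\cap\mathbb Z^n$, $C(A)$ the real cone generated by $A$, $M=V_{\mathbb Z}\cap C(A)$. Let $S_0$ be the $\mathbb C$-span of $\{x^u:u\in M\}$, $D_{i,0}=x_i\partial/\partial x_i+x_i\partial f_0/\partial x_i$ ($i=1,\dots,n$), and $\mathcal W_0=S_0/\sum_iD_{i,0}S_0$. For a $\mathbb C$-vector space $Y$ let $R_0(Y)$ be the set of formal sums $\xi=\sum_{u\in M}A_ux^{-u}$ with $A_u\in Y$, and define $D^*_{i,0}(\xi)=\sum_{v\in M}\big(v_iA_v+\sum_{j=1}^m\ell_ja_{ij}A_{v+\mathbf a_j}\big)x^{-v}$. Let $\mathcal K_0(Y)=\{\xi\in R_0(Y):D^*_{i,0}(\xi)=0\text{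 for }i=1,\dots,n\}$. *)

theory Defs
  imports "HOL-Analysis.Analysis"
begin

text \<open>Exponent vectors live in \<open>int ^ 'n\<close> (the lattice Z^n); the generators
  a_1..a_m are indexed by a finite type \<open>'m\<close>.\<close>

definition rvec :: "int ^ 'n \<Rightarrow> real ^ 'n" where
  "rvec u = (\<chi> i. real_of_int (u $ i))"

definition Vspan :: "('m::finite \<Rightarrow> int ^ 'n) \<Rightarrow> (real ^ 'n) set" where
  "Vspan a = span (range (\<lambda>j. rvec (a j)))"

definition coneA :: "('m::finite \<Rightarrow> int ^ 'n) \<Rightarrow> (real ^ 'n) set" where
  "coneA a = {(\<Sum>j\<in>UNIV. c j *\<^sub>R rvec (a j)) | c. \<forall>j. 0 \<le> c j}"

definition Mset :: "('m::finite \<Rightarrow> int ^ 'n) \<Rightarrow> (int ^ 'n) set" where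
  "Mset a = {u. rvec u \<in> Vspan a \<and> rvec u \<in> coneA a}"

text \<open>S_0: finite sums \<open>\<Sum> B_u x^u\<close> with u \<in> M, represented by coefficient functions.\<close>
definition S0 :: "('m::finite \<Rightarrow> int ^ 'n) \<Rightarrow> (int ^ 'n \<Rightarrow> complex) set" where
  "S0 a = {B. finite {u. B u \<noteq> 0} \<and> {u. B u \<noteq> 0} \<subseteq> Mset a}"

text \<open>D_{i,0} = x_i d/dx_i + x_i (d f_0/dx_i), f_0 = \<Sum>_j l_j x^{a_j}, acting on coefficients:
  coefficient of x^w in D_{i,0}(\<Sum> B_u x^u) is w_i B_w + \<Sum>_j l_j a_{ij} B_{w - a_j}.\<close>
definition Dop :: "('m::finite \<Rightarrow> int ^ 'n) \<Rightarrow> ('m \<Rightarrow> nat) \<Rightarrow> 'n \<Rightarrow>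
    (int ^ 'n \<Rightarrow> complex) \<Rightarrow> (int ^ 'n \<Rightarrow> complex)" where
  "Dop a l i B = (\<lambda>w. of_int (w $ i) * B w
      + (\<Sum>j\<in>UNIV. of_nat (l j) * of_int (a j $ i) * B (w - a j)))"

definition DS0 :: "('m::finite \<Rightarrow> int ^ 'n::finite) \<Rightarrow> ('m \<Rightarrow> nat) \<Rightarrow> (int ^ 'n \<Rightarrow> complex) set" where
  "DS0 a l = {(\<lambda>w. \<Sum>i\<in>UNIV. Dop a l i (B i) w) | B. \<forall>i. B i \<in> S0 a}"

text \<open>Hom_C(W_0, Y) with W_0 = S_0 / \<Sum>_i D_{i,0} S_0: C-linear maps on S_0 vanishing on
  \<Sum>_i D_{i,0} S_0 (only their values on S_0 matter).\<close>
definition HomW :: "('m::finite \<Rightarrow> int ^ 'n::finite) \<Rightarrow> ('m \<Rightarrow> nat) \<Rightarrow>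
    (complex \<Rightarrow> 'y::ab_group_add \<Rightarrow> 'y) \<Rightarrow> ((int ^ 'n \<Rightarrow> complex) \<Rightarrow> 'y) set" where
  "HomW a l sc = {\<phi>.
      (\<forall>B\<in>S0 a. \<forall>C\<in>S0 a. \<phi> (\<lambda>u. B u + C u) = \<phi> B + \<phi> C)
    \<and> (\<forall>c. \<forall>B\<in>S0 a. \<phi> (\<lambda>u. c * B u) = sc c (\<phi> B))
    \<and> (\<forall>B\<in>DS0 a l. \<phi> B = 0)}"

text \<open>R_0(Y): formal sums \<open>\<Sum>_{u\<in>M} A_u x^{-u}\<close>, as functions vanishing off M.\<close>
definition R0 :: "('m::finite \<Rightarrow> int ^ 'n) \<Rightarrow> (int ^ 'n \<Rightarrow> 'y::zero) set" where
  "R0 a = {\<xi>. \<forall>u. u \<notin> Mset a \<longrightarrow> \<xi> u = 0}"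

text \<open>Coefficient of x^{-v} in D^*_{i,0}(\<xi>).\<close>
definition Dstar :: "('m::finite \<Rightarrow> int ^ 'n) \<Rightarrow> ('m \<Rightarrow> nat) \<Rightarrow>
    (complex \<Rightarrow> 'y::ab_group_add \<Rightarrow> 'y) \<Rightarrow> 'n \<Rightarrow> (int ^ 'n \<Rightarrow> 'y) \<Rightarrow> int ^ 'n \<Rightarrow> 'y" where
  "Dstar a l sc i \<xi> v = sc (of_int (v $ i)) (\<xi> v)
      + (\<Sum>j\<in>UNIV. sc (of_nat (l j) * of_int (a j $ i)) (\<xi> (v + a j)))"

definition K0 :: "('m::finite \<Rightarrow> int ^ 'n::finite) \<Rightarrow> ('m \<Rightarrow> nat) \<Rightarrow>
    (complex \<Rightarrow> 'y::ab_group_add \<Rightarrow> 'y) \<Rightarrow> (int ^ 'n \<Rightarrow> 'y) set" where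
  "K0 a l sc = {\<xi> \<in> R0 a. \<forall>i. \<forall>v\<in>Mset a. Dstar a l sc i \<xi> v = 0}"

definition pairing :: "(complex \<Rightarrow> 'y::ab_group_add \<Rightarrow> 'y) \<Rightarrow> (int ^ 'n \<Rightarrow> 'y)
    \<Rightarrow> (int ^ 'n \<Rightarrow> complex) \<Rightarrow> 'y" where
  "pairing sc \<xi> B = (\<Sum>u\<in>{u. B u \<noteq> 0}. sc (B u) (\<xi> u))"

end

theory Submission
  imports Defs
begin

definition supp :: "(int ^ 'n \<Rightarrow> complex) \<Rightarrow> (int ^ 'n) set" where
  "supp B = {u. B u \<noteq> 0}"

definition dlt :: "int ^ 'n \<Rightarrow> int ^ 'n \<Rightarrow> complex" where
  "dlt v = (\<lambda>w. if w = v then 1 else 0)"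

lemma rvec_add: "rvec (u + v) = rvec u + rvec v"
  by (simp add: rvec_def vec_eq_iff)

lemma Mset_add:
  assumes "v \<in> Mset a" shows "v + a j \<in> Mset a"
proof -
  from assms have sp: "rvec v \<in> Vspan a" and co: "rvec v \<in> coneA a" by (auto simp: Mset_def)
  have "rvec (v + a j) \<in> Vspan a"
    using sp unfolding rvec_add Vspan_def by (intro span_add[OF _ span_base]) auto
  moreover
  from co obtain c where c: "rvec v = (\<Sum>k\<in>UNIV. c k *\<^sub>R rvec (a k))" "\<forall>k. 0 \<le> c k"
    by (auto simp: coneA_def)
  have "rvec (v + a j) = (\<Sum>k\<in>UNIV. (c k + (if k = j then 1 else 0)) *\<^sub>R rvec (a k))"
    proof -
    have "\<And>k. (if k = j then 1 else 0) *\<^sub>R rvec (a k) = (if k = j then rvec (a k) else 0)" by simp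
    then show ?thesis unfolding rvec_add c by (simp add: scaleR_add_left sum.distrib)
  qed
  hence "rvec (v + a j) \<in> coneA a" unfolding coneA_def using c(2)
    by (intro CollectI exI[of _ "\<lambda>k. c k + (if k = j then 1 else 0)"]) auto
  ultimately show ?thesis by (simp add: Mset_def)
qed

lemma dlt_S0: "v \<in> Mset a \<Longrightarrow> dlt v \<in> S0 a"
  by (auto simp: S0_def dlt_def)

locale cvs =
  fixes scale :: "complex \<Rightarrow> 'y::ab_group_add \<Rightarrow> 'y" (infixr \<open>\<odot>\<close> 75)
  assumes cvs_vs: "vector_space scale"

sublocale cvs \<subseteq> vector_space scale by (rule cvs_vs)

context cvs
begin

lemma pairing_over:
  assumes "finite T" "supp B \<subseteq> T"
  shows "pairing scale \<xi> B = (\<Sum>u\<in>T. B u \<odot> \<xi> u)"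
  unfolding pairing_def
  by (rule sum.mono_neutral_left) (use assms in \<open>auto simp: supp_def\<close>)

lemma pairing_sum:
  assumes "finite I" "\<forall>i\<in>I. finite (supp (F i))"
  shows "pairing scale \<xi> (\<lambda>w. \<Sum>i\<in>I. F i w) = (\<Sum>i\<in>I. pairing scale \<xi> (F i))"
proof -
  let ?T = "\<Union>i\<in>I. supp (F i)"
  have fT: "finite ?T" using assms by auto
  have "supp (\<lambda>w. \<Sum>i\<in>I. F i w) \<subseteq> ?T"
    by (auto simp: supp_def intro: ccontr)
  hence "pairing scale \<xi> (\<lambda>w. \<Sum>i\<in>I. F i w) = (\<Sum>u\<in>?T. (\<Sum>i\<in>I. F i u) \<odot> \<xi> u)"
    using pairing_over fT by blast
  also have "\<dots> = (\<Sum>i\<in>I. \<Sum>u\<in>?T. F i u \<odot> \<xi> u)"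
    by (simp add: scale_sum_left sum.swap[of _ ?T])
  also have "\<dots> = (\<Sum>i\<in>I. pairing scale \<xi> (F i))"
    by (rule sum.cong[OF refl], rule pairing_over[symmetric]) (use fT in auto)
  finally show ?thesis .
qed

lemma pairing_add:
  assumes "finite (supp B)" "finite (supp C)"
  shows "pairing scale \<xi> (\<lambda>u. B u + C u) = pairing scale \<xi> B + pairing scale \<xi> C"
proof -
  have "pairing scale \<xi> (\<lambda>u. \<Sum>i\<in>{True,False}. (if i then B else C) u)
     = (\<Sum>i\<in>{True,False}. pairing scale \<xi> (if i then B else C))"
    by (rule pairing_sum) (use assms in auto)
  thus ?thesis by simp
qed

lemma pairing_scal:
  shows "pairing scale \<xi> (\<lambda>u. c * B u) = c \<odot> pairing scale \<xi> B"
proof (cases "c = 0")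
  case True then show ?thesis by (simp add: pairing_def)
next
  case False then show ?thesis
    by (simp add: pairing_def scale_sum_right mult.commute)
qed

lemma pairing_lin:
  assumes "finite (supp B)"
  shows "pairing scale (\<lambda>u. c \<odot> \<xi> u + \<eta> u) B = c \<odot> pairing scale \<xi> B + pairing scale \<eta> B"
  unfolding pairing_def
  by (simp add: scale_right_distrib sum.distrib scale_sum_right scale_left_commute) (simp add: mult.commute)

lemma pairing_Dop:
  fixes a :: "'m::finite \<Rightarrow> int ^ 'n::finite"
  assumes fin: "finite (supp B)" and D: "\<forall>v\<in>supp B. Dstar a l scale i \<xi> v = 0"
  shows "pairing scale \<xi> (Dop a l i B) = 0"
proof -
  let ?S = "supp B"
  let ?T = "?S \<union> (\<Union>j. (\<lambda>u. u + a j) ` ?S)"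
  have fT: "finite ?T" using fin by auto
  have sub: "supp (Dop a l i B) \<subseteq> ?T"
  proof
    fix w assume w: "w \<in> supp (Dop a l i B)"
    show "w \<in> ?T"
    proof (rule ccontr)
      assume "w \<notin> ?T"
      hence "B w = 0" "\<forall>j. B (w - a j) = 0"
        by (auto simp: supp_def image_iff) (metis diff_add_cancel)
      hence "Dop a l i B w = 0" by (simp add: Dop_def)
      with w show False by (simp add: supp_def)
    qed
  qed
  have ST: "?S \<subseteq> ?T" by auto
  have 1: "(\<Sum>w\<in>?T. (of_int (w $ i) * B w) \<odot> \<xi> w) = (\<Sum>u\<in>?S. B u \<odot> (of_int (u $ i) \<odot> \<xi> u))"
    by (subst sum.mono_neutral_left[OF fT ST, symmetric]) (auto simp: supp_def scale_scale mult.commute)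
  have 2: "(\<Sum>w\<in>?T. (of_nat (l j) * of_int (a j $ i) * B (w - a j)) \<odot> \<xi> w)
      = (\<Sum>u\<in>?S. B u \<odot> ((of_nat (l j) * of_int (a j $ i)) \<odot> \<xi> (u + a j)))" for j
  proof -
    have sj: "(\<lambda>u. u + a j) ` ?S \<subseteq> ?T" by auto
    have "(\<Sum>w\<in>?T. (of_nat (l j) * of_int (a j $ i) * B (w - a j)) \<odot> \<xi> w)
        = (\<Sum>w\<in>(\<lambda>u. u + a j) ` ?S. (of_nat (l j) * of_int (a j $ i) * B (w - a j)) \<odot> \<xi> w)"
    proof (rule sum.mono_neutral_right[OF fT sj], rule ballI)
      fix w assume "w \<in> ?T - (\<lambda>u. u + a j) ` ?S"
      hence "B (w - a j) = 0"
        by (metis (mono_tags) DiffD2 diff_add_cancel image_eqI mem_Collect_eq supp_def)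
      thus "(of_nat (l j) * of_int (a j $ i) * B (w - a j)) \<odot> \<xi> w = 0" by simp
    qed
    also have "\<dots> = (\<Sum>u\<in>?S. (of_nat (l j) * of_int (a j $ i) * B u) \<odot> \<xi> (u + a j))"
      by (subst sum.reindex) (auto simp: inj_on_def)
    also have "\<dots> = (\<Sum>u\<in>?S. B u \<odot> ((of_nat (l j) * of_int (a j $ i)) \<odot> \<xi> (u + a j)))"
      by (simp add: scale_scale mult.commute)
    finally show ?thesis .
  qed
  have "pairing scale \<xi> (Dop a l i B) = (\<Sum>w\<in>?T. Dop a l i B w \<odot> \<xi> w)"
    by (rule pairing_over[OF fT sub])
  also have "\<dots> = (\<Sum>w\<in>?T. (of_int (w $ i) * B w) \<odot> \<xi> w)
      + (\<Sum>j\<in>UNIV. \<Sum>w\<in>?T. (of_nat (l j) * of_int (a j $ i) * B (w - a j)) \<odot> \<xi> w)"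
    by (simp add: Dop_def scale_left_distrib scale_sum_left sum.distrib sum.swap[of _ ?T])
  also have "\<dots> = (\<Sum>u\<in>?S. B u \<odot> Dstar a l scale i \<xi> u)"
    unfolding 1 2 by (simp add: Dstar_def scale_right_distrib scale_sum_right sum.distrib sum.swap[of _ ?S])
  also have "\<dots> = 0" using D by simp
  finally show ?thesis .
qed

end

lemma S0_fin: "B \<in> S0 a \<Longrightarrow> finite (supp B)"
  by (simp add: S0_def supp_def)

lemma Dop_zero: "Dop a l i (\<lambda>_. 0) = (\<lambda>_. 0)"
  by (simp add: Dop_def)

lemma HomW_add: "\<phi> \<in> HomW a l sc \<Longrightarrow> B \<in> S0 a \<Longrightarrow> C \<in> S0 a \<Longrightarrow> \<phi> (\<lambda>u. B u + C u) = \<phi> B + \<phi> C"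
  by (simp add: HomW_def)

lemma HomW_scal: "\<phi> \<in> HomW a l sc \<Longrightarrow> B \<in> S0 a \<Longrightarrow> \<phi> (\<lambda>u. c * B u) = sc c (\<phi> B)"
  by (simp add: HomW_def)

lemma HomW_DS0: "\<phi> \<in> HomW a l sc \<Longrightarrow> B \<in> DS0 a l \<Longrightarrow> \<phi> B = 0"
  by (simp add: HomW_def)

lemma phi_sum:
  assumes phi: "\<phi> \<in> HomW a l sc" and Y: "vector_space sc"
    and "finite I"
  shows "(\<forall>i\<in>I. F i \<in> S0 a) \<longrightarrow> (\<lambda>w. \<Sum>i\<in>I. F i w) \<in> S0 a \<and> \<phi> (\<lambda>w. \<Sum>i\<in>I. F i w) = (\<Sum>i\<in>I. \<phi> (F i))"
  using \<open>finite I\<close>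
proof (induction I rule: finite_induct)
  case empty
  interpret vector_space sc by (rule Y)
  have z: "(\<lambda>_. 0::complex) \<in> S0 a" by (simp add: S0_def)
  have hom: "\<forall>c. \<forall>B\<in>S0 a. \<phi> (\<lambda>u. c * B u) = sc c (\<phi> B)" using phi by (simp add: HomW_def)
  have "\<phi> (\<lambda>u. 0 * (\<lambda>_. (0::complex)) u) = sc 0 (\<phi> (\<lambda>_. 0))"
    by (rule hom[rule_format, OF z, of 0])
  then show ?case using z by (simp add: lambda_zero)
next
  case (insert x F')
  show ?case
  proof
    assume h: "\<forall>i\<in>insert x F'. F i \<in> S0 a"
    with insert have IH: "(\<lambda>w. \<Sum>i\<in>F'. F i w) \<in> S0 a" "\<phi> (\<lambda>w. \<Sum>i\<in>F'. F i w) = (\<Sum>i\<in>F'. \<phi> (F i))"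
      by auto
    have Fx: "F x \<in> S0 a" using h by auto
    have "(\<lambda>w. F x w + (\<Sum>i\<in>F'. F i w)) \<in> S0 a"
      using Fx IH(1) unfolding S0_def
      by (auto intro: finite_subset[of _ "{u. F x u \<noteq> 0} \<union> {u. (\<Sum>i\<in>F'. F i u) \<noteq> 0}"])
         (metis (mono_tags, lifting) add.left_neutral add.right_neutral mem_Collect_eq subsetD)
    moreover have "\<phi> (\<lambda>w. F x w + (\<Sum>i\<in>F'. F i w)) = \<phi> (F x) + \<phi> (\<lambda>w. \<Sum>i\<in>F'. F i w)"
      by (rule HomW_add[OF phi Fx IH(1)])
    ultimately show "(\<lambda>w. \<Sum>i\<in>insert x F'. F i w) \<in> S0 a \<and>
        \<phi> (\<lambda>w. \<Sum>i\<in>insert x F'. F i w) = (\<Sum>i\<in>insert x F'. \<phi> (F i))"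
      using insert IH(2) by simp
  qed
qed


lemma supp_Dop:
  assumes "finite (supp B)"
  shows "finite (supp (Dop a l i B))"
proof -
  let ?S = "supp B"
  let ?T = "?S \<union> (\<Union>j. (\<lambda>u. u + a j) ` ?S)"
  have "supp (Dop a l i B) \<subseteq> ?T"
  proof
    fix w assume w: "w \<in> supp (Dop a l i B)"
    show "w \<in> ?T"
    proof (rule ccontr)
      assume "w \<notin> ?T"
      hence "B w = 0" "\<forall>j. B (w - a j) = 0"
        by (auto simp: supp_def image_iff) (metis diff_add_cancel)
      hence "Dop a l i B w = 0" by (simp add: Dop_def)
      with w show False by (simp add: supp_def)
    qed
  qed
  moreover have "finite ?T" using assms by auto
  ultimately show ?thesis by (rule finite_subset)
qed

lemma supp_dlt: "supp (dlt u) = {u}"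
  by (auto simp: supp_def dlt_def)

lemma pairing_dlt:
  assumes Y: "vector_space sc"
  shows "pairing sc \<xi> (dlt u) = \<xi> u"
proof -
  interpret vector_space sc by (rule Y)
  show ?thesis using supp_dlt[of u] by (simp add: pairing_def supp_def dlt_def)
qed

lemma phi_repr:
  assumes phi: "\<phi> \<in> HomW a l sc" and Y: "vector_space sc" and B: "B \<in> S0 a"
  shows "\<phi> B = (\<Sum>u\<in>supp B. sc (B u) (\<phi> (dlt u)))"
proof -
  have fin: "finite (supp B)" using B by (rule S0_fin)
  have eq: "B = (\<lambda>w. \<Sum>u\<in>supp B. B u * dlt u w)"
  proof
    fix w
    have "(\<Sum>u\<in>supp B. B u * dlt u w) = (\<Sum>u\<in>supp B. if u = w then B w else 0)"
      by (rule sum.cong) (auto simp: dlt_def)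
    also have "\<dots> = B w" using fin by (simp add: supp_def)
    finally show "B w = (\<Sum>u\<in>supp B. B u * dlt u w)" by simp
  qed
  have mem: "\<forall>u\<in>supp B. (\<lambda>w. B u * dlt u w) \<in> S0 a"
    using B by (auto simp: S0_def supp_def dlt_def)
  have "\<phi> (\<lambda>w. \<Sum>u\<in>supp B. B u * dlt u w) = (\<Sum>u\<in>supp B. \<phi> (\<lambda>w. B u * dlt u w))"
    using phi_sum[OF phi Y fin, of "\<lambda>u w. B u * dlt u w"] mem by simp
  also have "\<dots> = (\<Sum>u\<in>supp B. sc (B u) (\<phi> (dlt u)))"
  proof (rule sum.cong[OF refl])
    fix u assume "u \<in> supp B"
    hence "dlt u \<in> S0 a" using B by (intro dlt_S0) (auto simp: S0_def supp_def)
    thus "\<phi> (\<lambda>w. B u * dlt u w) = sc (B u) (\<phi> (dlt u))" by (rule HomW_scal[OF phi])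
  qed
  finally show ?thesis using eq by simp
qed

theorem proposition2p9:
  fixes a :: "'m::finite \<Rightarrow> int ^ 'n::finite"
    and l :: "'m \<Rightarrow> nat"
    and a0 :: "int ^ 'n"
    and sc :: "complex \<Rightarrow> 'y::ab_group_add \<Rightarrow> 'y"
  assumes Y: "vector_space sc"
    and inj: "inj (\<lambda>j. rvec (a j))"
    and indep: "independent (range (\<lambda>j. rvec (a j)))"
    and lpos: "\<forall>j. 0 < l j"
    and rel: "\<forall>i. int (\<Sum>j\<in>UNIV. l j) * a0 $ i = (\<Sum>j\<in>UNIV. int (l j) * a j $ i)"
    and gcd: "Gcd (insert (\<Sum>j\<in>UNIV. l j) (range l)) = 1"
  shows "(\<forall>\<xi>\<in>K0 a l sc. pairing sc \<xi> \<in> HomW a l sc)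
       \<and> (\<forall>\<xi>\<in>K0 a l sc. \<forall>\<eta>\<in>K0 a l sc. \<forall>c. \<forall>B\<in>S0 a.
            pairing sc (\<lambda>u. sc c (\<xi> u) + \<eta> u) B
              = sc c (pairing sc \<xi> B) + pairing sc \<eta> B)
       \<and> (\<forall>\<phi>\<in>HomW a l sc. \<exists>!\<xi>. \<xi> \<in> K0 a l sc \<and>
            (\<forall>B\<in>S0 a. pairing sc \<xi> B = \<phi> B))"
proof (intro conjI)
  have cv: "cvs sc" using Y by (simp add: cvs_def)
  interpret V: vector_space sc by (rule Y)
  show "\<forall>\<xi>\<in>K0 a l sc. pairing sc \<xi> \<in> HomW a l sc"
  proof
    fix \<xi> assume xi: "\<xi> \<in> K0 a l sc"
    have DS: "pairing sc \<xi> F = 0" if F: "F \<in> DS0 a l" for F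
    proof -
      from F obtain B where F: "F = (\<lambda>w. \<Sum>i\<in>UNIV. Dop a l i (B i) w)" and B: "\<forall>i. B i \<in> S0 a"
        by (auto simp: DS0_def)
      have "pairing sc \<xi> F = (\<Sum>i\<in>UNIV. pairing sc \<xi> (Dop a l i (B i)))"
        unfolding F by (rule cvs.pairing_sum[OF cv]) (simp_all, metis B S0_fin supp_Dop)
      also have "\<dots> = 0"
      proof (rule sum.neutral, rule ballI)
        fix i
        have "\<forall>v\<in>supp (B i). Dstar a l sc i \<xi> v = 0"
          using xi B by (auto simp: K0_def S0_def supp_def)
        then show "pairing sc \<xi> (Dop a l i (B i)) = 0"
          by (rule cvs.pairing_Dop[OF cv S0_fin[OF B[rule_format]]])
      qed
      finally show ?thesis .
    qed
    show "pairing sc \<xi> \<in> HomW a l sc"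
      unfolding HomW_def
      using cvs.pairing_add[OF cv] cvs.pairing_scal[OF cv] S0_fin DS by blast
  qed
  show "\<forall>\<xi>\<in>K0 a l sc. \<forall>\<eta>\<in>K0 a l sc. \<forall>c. \<forall>B\<in>S0 a.
            pairing sc (\<lambda>u. sc c (\<xi> u) + \<eta> u) B
              = sc c (pairing sc \<xi> B) + pairing sc \<eta> B"
    using cvs.pairing_lin[OF cv] S0_fin by blast
  show "\<forall>\<phi>\<in>HomW a l sc. \<exists>!\<xi>. \<xi> \<in> K0 a l sc \<and>
            (\<forall>B\<in>S0 a. pairing sc \<xi> B = \<phi> B)"
  proof
    fix \<phi> assume phi: "\<phi> \<in> HomW a l sc"
    define \<xi>0 where "\<xi>0 = (\<lambda>u. if u \<in> Mset a then \<phi> (dlt u) else 0)"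
    have pair: "pairing sc \<xi>0 B = \<phi> B" if B: "B \<in> S0 a" for B
    proof -
      have "pairing sc \<xi>0 B = (\<Sum>u\<in>supp B. sc (B u) (\<xi>0 u))"
        by (simp add: pairing_def supp_def)
      also have "\<dots> = (\<Sum>u\<in>supp B. sc (B u) (\<phi> (dlt u)))"
        using B by (intro sum.cong) (auto simp: \<xi>0_def S0_def supp_def)
      also have "\<dots> = \<phi> B" using phi_repr[OF phi Y B] by simp
      finally show ?thesis .
    qed
    have K: "\<xi>0 \<in> K0 a l sc"
      unfolding K0_def
    proof (intro CollectI conjI allI ballI)
      show "\<xi>0 \<in> R0 a" by (simp add: R0_def \<xi>0_def)
      fix i v assume v: "v \<in> Mset a"
      define H0 where "H0 = (\<lambda>w. of_int (v $ i) * dlt v w)"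
      define H where "H = (\<lambda>j w. (of_nat (l j) * of_int (a j $ i)) * dlt (v + a j) w)"
      have dv: "dlt v \<in> S0 a" by (rule dlt_S0[OF v])
      have dvj: "dlt (v + a j) \<in> S0 a" for j by (rule dlt_S0[OF Mset_add[OF v]])
      have H0S: "H0 \<in> S0 a" using dv by (auto simp: H0_def S0_def intro: finite_subset)
      have HS: "\<forall>j\<in>UNIV. H j \<in> S0 a" using dvj by (auto simp: H_def S0_def intro: finite_subset)
      note ps = phi_sum[OF phi Y finite_class.finite_UNIV, of H, THEN mp, OF HS]
      have G: "(\<lambda>w. \<Sum>i'\<in>UNIV. Dop a l i' (if i' = i then dlt v else (\<lambda>_. 0)) w) \<in> DS0 a l"
        unfolding DS0_def using dv by (intro CollectI exI[of _ "\<lambda>i'. if i' = i then dlt v else (\<lambda>_. 0)"]) (auto simp: S0_def)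
      have "(\<lambda>w. \<Sum>i'\<in>UNIV. Dop a l i' (if i' = i then dlt v else (\<lambda>_. 0)) w) = Dop a l i (dlt v)"
      proof
        fix w
        have "\<And>i'. Dop a l i' (if i' = i then dlt v else (\<lambda>_. 0)) w = (if i' = i then Dop a l i (dlt v) w else 0)"
          by (simp add: Dop_def)
        then show "(\<Sum>i'\<in>UNIV. Dop a l i' (if i' = i then dlt v else (\<lambda>_. 0)) w) = Dop a l i (dlt v) w"
          by simp
      qed
      also have "Dop a l i (dlt v) = (\<lambda>w. H0 w + (\<Sum>j\<in>UNIV. H j w))"
      proof
        fix w
        have "dlt v (w - a j) = dlt (v + a j) w" for j by (auto simp: dlt_def)
        moreover have "of_int (w $ i) * dlt v w = of_int (v $ i) * dlt v w" by (simp add: dlt_def)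
        ultimately show "Dop a l i (dlt v) w = H0 w + (\<Sum>j\<in>UNIV. H j w)"
          by (simp add: Dop_def H0_def H_def)
      qed
      finally have "\<phi> (\<lambda>w. H0 w + (\<Sum>j\<in>UNIV. H j w)) = 0"
        using HomW_DS0[OF phi G] by simp
      moreover have "\<phi> (\<lambda>w. H0 w + (\<Sum>j\<in>UNIV. H j w)) = \<phi> H0 + \<phi> (\<lambda>w. \<Sum>j\<in>UNIV. H j w)"
        by (rule HomW_add[OF phi H0S conjunct1[OF ps]])
      moreover have "\<phi> H0 = sc (of_int (v $ i)) (\<phi> (dlt v))"
        unfolding H0_def by (rule HomW_scal[OF phi dv])
      moreover have "\<phi> (H j) = sc (of_nat (l j) * of_int (a j $ i)) (\<phi> (dlt (v + a j)))" for j
        unfolding H_def by (rule HomW_scal[OF phi dvj])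
      ultimately show "Dstar a l sc i \<xi>0 v = 0"
        using conjunct2[OF ps] v Mset_add[OF v] by (simp add: Dstar_def \<xi>0_def)
    qed
    show "\<exists>!\<xi>. \<xi> \<in> K0 a l sc \<and> (\<forall>B\<in>S0 a. pairing sc \<xi> B = \<phi> B)"
    proof (rule ex1I[of _ \<xi>0])
      show "\<xi>0 \<in> K0 a l sc \<and> (\<forall>B\<in>S0 a. pairing sc \<xi>0 B = \<phi> B)" using K pair by blast
      fix \<xi> assume h: "\<xi> \<in> K0 a l sc \<and> (\<forall>B\<in>S0 a. pairing sc \<xi> B = \<phi> B)"
      show "\<xi> = \<xi>0"
      proof
        fix u
        show "\<xi> u = \<xi>0 u"
        proof (cases "u \<in> Mset a")
          case True
          have "\<xi> u = pairing sc \<xi> (dlt u)" by (simp add: pairing_dlt[OF Y])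
          also have "\<dots> = \<phi> (dlt u)" using h dlt_S0[OF True] by blast
          finally show ?thesis using True by (simp add: \<xi>0_def)
        next
          case False
          then show ?thesis using h by (simp add: \<xi>0_def K0_def R0_def)
        qed
      qed
    qed
  qed
qed

end
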